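(* Let $\mathcal{A}$ be a safe GTA without renamings with $n\ge1$ clocks, and let $M\in\mathbb{N}$ be such that every finite constant $c$ in a guard of $\mathcal{A}$ satisfies $|c|\le M$. Let $\rho: (q_1,v_1)\xrightarrow{\delta_1,t_1}(q_2,v_2)\xrightarrow{\delta_2,t_2}\cdots(q_k,v_k)$ be a path in the transition system of $\mathcal{A}$ such that $v_1\sim_M v_k$ and for every future clock $x$, either $x$ is released in the transition sequence $t_1\dots t_{k-1}$ or $v_1(x)=-\infty$. Let $L=\{x\mid -M\le v_1(x)\}$, and let $v_k'$ be a valuation with $v_k'\!\downarrow_L=v_k\!\downarrow_L$ and $v_1\approx_M v_k'$. Then there is a path $\rho': (q_1,v_1)=(q_1,v_1')\xrightarrow{\delta_1,t_1}(q_2,v_2')\xrightarrow{\delta_2,t_2}\cdots(q_k,v_k')$ in the transition system of $\mathcal{A}$ leading from $(q_1,v_1)$ to $(q_k,v_k')$.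
   Context: Clocks, valuations: $X=X_F\uplus X_H$ (future / history clocks), $n=|X|$, constant clock $0$; $\overline{\mathbb{R}}=\mathbb{R}\cup\{\pm\infty\}$ with $(+\infty)+\alpha=+\infty$, $(-\infty)+\beta=-\infty$ for $\beta\ne+\infty$, $-(\pm\infty)=\mp\infty$. A valuation $v:X\cup\{0\}\to\overline{\mathbb{R}}$ has $v(0)=0$, history clocks in $\mathbb{R}_{\ge0}\cup\{+\infty\}$, future clocks in $\mathbb{R}_{\le0}\cup\{-\infty\}$; $v\!\downarrow_L$ is restriction to $L$. Constraints: conjunctions of $x-y\triangleleft c$ ($x,y\in X\cup\{0\}$, ${\triangleleft}\in\{<,\le\}$, $c\in\mathbb{Z}\cup\{\pm\infty\}$), $v\models x-y\triangleleft c$ iff $v(x)-v(y)\triangleleft c$. $v+\delta$ adds $\delta$ to each clock; $[R]v$ is the set of $v'$ with $v'(x)=0$ for $x\in R\cap X_H$, $v'(x)=v(x)$ for $x\notin R$, arbitrary for $x\in R\cap X_F$ (released). GTA without renamings: transitions $t=(q,a,\mathsf{prog},q')$, $\mathsf{prog}$ a sequence of guards $g$ ($v\xrightarrow{g}v$ iff $v\models g$) and changes $[R]$ ($v\xrightarrow{[R]}v'$ iff $v'\in[R]v$); a future clock $x$ is released in $t$ if $\mathsf{prog}$ contains $[R]$ with $x\in R$. A step $(q,v)\xrightarrow{\delta,t}(q',v')$ means $v+\delta$ is a valuation and $v+\delta\xrightarrow{\mathsf{prog}}v'$. Safety: with $X_D$ the future clocks occurring in guards $x-y\triangleleft c$ with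 $x,y\in X_F$, every program checks each clock of $X_D$ to be $0$ or $-\infty$ before releasing it, and initial guards force every history clock to $0$ or $+\infty$. For $\alpha\in\mathbb{R}$, $\{\alpha\}=\alpha-\lfloor\alpha\rfloor$. $\alpha\sim_K\beta$ iff $\alpha\triangleleft c\iff\beta\triangleleft c$ for ${\triangleleft}\in\{<,\le\}$, $c\in\{\pm\infty\}$ or $c\in\mathbb{Z}$ with $|c|\le K$; $v_1\sim_M v_2$ iff $v_1(x)\sim_{nM}v_2(x)$ for all $x$ and $v_1(x)-v_1(y)\sim_{(n+1)M}v_2(x)-v_2(y)$ for all $x,y$. $v_1\approx_M v_2$ iff for all clocks $x,y$: (1) $v_1(x)\triangleleft c\iff v_2(x)\triangleleft c$ for $c\in\{\pm\infty\}$ or $c\in\mathbb{Z}$, $c\le M$; (2) $v_1\models x-y\triangleleft c\iff v_2\models x-y\triangleleft c$ for $c\in\{\pm\infty\}$ or $c\in\mathbb{Z}$, $|c|\le M$; (3) if $-\infty<v_1(x),v_1(y)\le M$ then $\{v_1(x)\}\le\{v_1(y)\}\iff\{v_2(x)\}\le\{v_2(y)\}$. *)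

theory Defs
  imports Complex_Main "HOL-Library.Extended_Real"
begin

text \<open>Clocks are the elements of a finite type 'c (so n = CARD('c) >= 1).
  The set XF of future clocks is a parameter; history clocks are the others.
  The constant clock 0 is added via the datatype clk.\<close>

datatype 'c clk = Zero | Clk 'c

type_synonym 'c valuation = "'c \<Rightarrow> ereal"

fun clk_val :: "'c valuation \<Rightarrow> 'c clk \<Rightarrow> ereal" where
  "clk_val v Zero = 0"
| "clk_val v (Clk x) = v x"

text \<open>Difference with the paper's conventions: a - b = a + (-b), where
  the ereal addition satisfies (+oo)+a = +oo and (-oo)+b = -oo for b ~= +oo.\<close>
definition ediff :: "ereal \<Rightarrow> ereal \<Rightarrow> ereal" where
  "ediff a b = a + (- b)"

definition is_val :: "'c set \<Rightarrow> 'c valuation \<Rightarrow> bool" where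
  "is_val XF v \<longleftrightarrow> (\<forall>x. x \<notin> XF \<longrightarrow> 0 \<le> v x) \<and> (\<forall>x. x \<in> XF \<longrightarrow> v x \<le> 0)"

datatype zbound = ZFin int | ZPInf | ZMInf

fun zb_val :: "zbound \<Rightarrow> ereal" where
  "zb_val (ZFin c) = ereal (of_int c)"
| "zb_val ZPInf = \<infinity>"
| "zb_val ZMInf = - \<infinity>"

text \<open>Atomic constraint x - y < c (strict = True) or x - y <= c (strict = False).\<close>
type_synonym 'c atom = "'c clk \<times> 'c clk \<times> bool \<times> zbound"
type_synonym 'c guard = "'c atom list"

fun sat_atom :: "'c valuation \<Rightarrow> 'c atom \<Rightarrow> bool" where
  "sat_atom v (x, y, strict, c) =
     (if strict then ediff (clk_val v x) (clk_val v y) < zb_val c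
      else ediff (clk_val v x) (clk_val v y) \<le> zb_val c)"

definition sat :: "'c valuation \<Rightarrow> 'c guard \<Rightarrow> bool" where
  "sat v g \<longleftrightarrow> (\<forall>a \<in> set g. sat_atom v a)"

datatype 'c instr = Guard "'c guard" | Change "'c set"

type_synonym 'c prog = "'c instr list"
type_synonym ('q, 'a, 'c) transition = "'q \<times> 'a \<times> 'c prog \<times> 'q"

record ('q, 'a, 'c) gta =
  gta_init :: "('q \<times> 'c guard) set"
  gta_trans :: "('q, 'a, 'c) transition set"

definition is_gta :: "('q, 'a, 'c) gta \<Rightarrow> bool" where
  "is_gta A \<longleftrightarrow> finite (gta_init A) \<and> finite (gta_trans A)"

definition t_src :: "('q, 'a, 'c) transition \<Rightarrow> 'q" where
  "t_src t = (case t of (q, a, p, q') \<Rightarrow> q)"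
definition t_prog :: "('q, 'a, 'c) transition \<Rightarrow> 'c prog" where
  "t_prog t = (case t of (q, a, p, q') \<Rightarrow> p)"
definition t_tgt :: "('q, 'a, 'c) transition \<Rightarrow> 'q" where
  "t_tgt t = (case t of (q, a, p, q') \<Rightarrow> q')"

definition change :: "'c set \<Rightarrow> 'c set \<Rightarrow> 'c valuation \<Rightarrow> 'c valuation set" where
  "change XF R v = {u. is_val XF u \<and> (\<forall>x \<in> R. x \<notin> XF \<longrightarrow> u x = 0)
                        \<and> (\<forall>x. x \<notin> R \<longrightarrow> u x = v x)}"

fun prog_sem :: "'c set \<Rightarrow> 'c prog \<Rightarrow> 'c valuation \<Rightarrow> 'c valuation \<Rightarrow> bool" where
  "prog_sem XF [] v v' = (v' = v)"
| "prog_sem XF (Guard g # p) v v' = (sat v g \<and> prog_sem XF p v v')"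
| "prog_sem XF (Change R # p) v v' = (\<exists>u \<in> change XF R v. prog_sem XF p u v')"

definition shift :: "'c valuation \<Rightarrow> real \<Rightarrow> 'c valuation" where
  "shift v \<delta> = (\<lambda>x. v x + ereal \<delta>)"

definition step :: "'c set \<Rightarrow> ('q, 'a, 'c) gta \<Rightarrow> 'q \<Rightarrow> 'c valuation \<Rightarrow> real
                     \<Rightarrow> ('q, 'a, 'c) transition \<Rightarrow> 'q \<Rightarrow> 'c valuation \<Rightarrow> bool" where
  "step XF A q v \<delta> t q' v' \<longleftrightarrow>
     t \<in> gta_trans A \<and> t_src t = q \<and> t_tgt t = q' \<and> 0 \<le> \<delta> \<and>
     is_val XF v \<and> is_val XF v' \<and>
     is_val XF (shift v \<delta>) \<and> prog_sem XF (t_prog t) (shift v \<delta>) v'"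

definition is_path :: "'c set \<Rightarrow> ('q, 'a, 'c) gta \<Rightarrow> nat \<Rightarrow> (nat \<Rightarrow> 'q) \<Rightarrow> (nat \<Rightarrow> 'c valuation)
                        \<Rightarrow> (nat \<Rightarrow> real) \<Rightarrow> (nat \<Rightarrow> ('q, 'a, 'c) transition) \<Rightarrow> bool" where
  "is_path XF A k q v d t \<longleftrightarrow> 1 \<le> k \<and> (\<forall>i \<in> {1..k}. is_val XF (v i)) \<and>
     (\<forall>i \<in> {1..<k}. step XF A (q i) (v i) (d i) (t i) (q (Suc i)) (v (Suc i)))"

definition released :: "'c \<Rightarrow> ('q, 'a, 'c) transition \<Rightarrow> bool" where
  "released x t \<longleftrightarrow> (\<exists>R. Change R \<in> set (t_prog t) \<and> x \<in> R)"

definition guards_of :: "('q, 'a, 'c) gta \<Rightarrow> 'c guard set" where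
  "guards_of A = snd ` gta_init A \<union> {g. \<exists>t \<in> gta_trans A. Guard g \<in> set (t_prog t)}"

definition bounded_by :: "('q, 'a, 'c) gta \<Rightarrow> nat \<Rightarrow> bool" where
  "bounded_by A M \<longleftrightarrow> (\<forall>g \<in> guards_of A. \<forall>(x, y, s, c) \<in> set g.
      \<forall>c'. c = ZFin c' \<longrightarrow> \<bar>c'\<bar> \<le> int M)"

definition XD :: "'c set \<Rightarrow> ('q, 'a, 'c) gta \<Rightarrow> 'c set" where
  "XD XF A = {z. \<exists>g \<in> guards_of A. \<exists>x y s c. (Clk x, Clk y, s, c) \<in> set g
                  \<and> x \<in> XF \<and> y \<in> XF \<and> (z = x \<or> z = y)}"

definition safe :: "'c set \<Rightarrow> ('q, 'a, 'c) gta \<Rightarrow> bool" where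
  "safe XF A \<longleftrightarrow>
    (\<forall>t \<in> gta_trans A. \<forall>p1 R p2. t_prog t = p1 @ Change R # p2 \<longrightarrow>
       (\<forall>u u'. is_val XF u \<and> prog_sem XF p1 u u' \<longrightarrow>
          (\<forall>x \<in> R \<inter> XD XF A. u' x = 0 \<or> u' x = - \<infinity>))) \<and>
    (\<forall>(q, g) \<in> gta_init A. \<forall>u. is_val XF u \<and> sat u g \<longrightarrow>
       (\<forall>x. x \<notin> XF \<longrightarrow> u x = 0 \<or> u x = \<infinity>))"

definition bset :: "nat \<Rightarrow> ereal set" where
  "bset K = {\<infinity>, - \<infinity>} \<union> {ereal (of_int c) | c. \<bar>c\<bar> \<le> int K}"

definition simK :: "nat \<Rightarrow> ereal \<Rightarrow> ereal \<Rightarrow> bool" where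
  "simK K a b \<longleftrightarrow> (\<forall>c \<in> bset K. (a < c \<longleftrightarrow> b < c) \<and> (a \<le> c \<longleftrightarrow> b \<le> c))"

definition sim_M :: "nat \<Rightarrow> ('c::finite) valuation \<Rightarrow> 'c valuation \<Rightarrow> bool" where
  "sim_M M v1 v2 \<longleftrightarrow>
     (\<forall>x. simK (card (UNIV :: 'c set) * M) (v1 x) (v2 x)) \<and>
     (\<forall>x y. simK ((card (UNIV :: 'c set) + 1) * M) (ediff (v1 x) (v1 y)) (ediff (v2 x) (v2 y)))"

definition approx_M :: "nat \<Rightarrow> 'c valuation \<Rightarrow> 'c valuation \<Rightarrow> bool" where
  "approx_M M v1 v2 \<longleftrightarrow>
     (\<forall>x. \<forall>c \<in> {\<infinity>, - \<infinity>} \<union> {ereal (of_int c) | c. c \<le> int M}.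
        (v1 x < c \<longleftrightarrow> v2 x < c) \<and> (v1 x \<le> c \<longleftrightarrow> v2 x \<le> c)) \<and>
     (\<forall>x y. \<forall>c \<in> bset M.
        (ediff (v1 x) (v1 y) < c \<longleftrightarrow> ediff (v2 x) (v2 y) < c) \<and>
        (ediff (v1 x) (v1 y) \<le> c \<longleftrightarrow> ediff (v2 x) (v2 y) \<le> c)) \<and>
     (\<forall>x y. - \<infinity> < v1 x \<and> v1 x \<le> ereal (real M) \<and> - \<infinity> < v1 y \<and> v1 y \<le> ereal (real M) \<longrightarrow>
        (frac (real_of_ereal (v1 x)) \<le> frac (real_of_ereal (v1 y)) \<longleftrightarrow>
         frac (real_of_ereal (v2 x)) \<le> frac (real_of_ereal (v2 y))))"

end

theory Submission imports Defs begin

lemma simK_refl: "simK K a a" by (simp add: simK_def)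
lemma simK_sym: "simK K a b \<Longrightarrow> simK K b a" by (simp add: simK_def)
lemma simK_trans: "simK K a b \<Longrightarrow> simK K b c \<Longrightarrow> simK K a c" by (simp add: simK_def)
lemma bset_mono: "K \<le> K' \<Longrightarrow> bset K \<subseteq> bset K'"
  unfolding bset_def by force
lemma simK_mono: "K \<le> K' \<Longrightarrow> simK K' a b \<Longrightarrow> simK K a b"
  unfolding simK_def using bset_mono by blast

lemma bset_cases: "c \<in> bset M \<Longrightarrow> c = \<infinity> \<or> c = -\<infinity> \<or> (\<exists>z. c = ereal z \<and> - real M \<le> z \<and> z \<le> real M)"
  unfolding bset_def by auto

lemma simK_low:
  assumes "a < ereal (- real M)" "b < ereal (- real M)" "a \<noteq> -\<infinity>" "b \<noteq> -\<infinity>"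
  shows "simK M a b"
  unfolding simK_def
proof
  fix c assume "c \<in> bset M"
  from bset_cases[OF this] show "(a < c) = (b < c) \<and> (a \<le> c) = (b \<le> c)"
  proof (elim disjE exE conjE)
    assume "c = \<infinity>" thus ?thesis using assms by auto
  next
    assume "c = -\<infinity>" thus ?thesis using assms by auto
  next
    fix z assume z: "c = ereal z" "- real M \<le> z"
    have "a < c" "b < c" using assms z by (auto intro: less_le_trans)
    thus ?thesis by auto
  qed
qed

lemma simK_high:
  assumes "ereal (real M) < a" "ereal (real M) < b" "a \<noteq> \<infinity>" "b \<noteq> \<infinity>"
  shows "simK M a b"
  unfolding simK_def
proof
  fix c assume "c \<in> bset M"
  from bset_cases[OF this] show "(a < c) = (b < c) \<and> (a \<le> c) = (b \<le> c)"
  proof (elim disjE exE conjE)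
    assume "c = \<infinity>" thus ?thesis using assms by auto
  next
    assume "c = -\<infinity>" thus ?thesis using assms by auto
  next
    fix z assume z: "c = ereal z" "z \<le> real M"
    have cm: "c \<le> ereal (real M)" using z by simp
    have "c < a" "c < b" using assms(1,2) cm by (auto intro: le_less_trans)
    hence "\<not> a < c" "\<not> b < c" "\<not> a \<le> c" "\<not> b \<le> c" by auto
    thus ?thesis by auto
  qed
qed

definition off :: "'c set \<Rightarrow> ('c \<Rightarrow> real) \<Rightarrow> 'c valuation \<Rightarrow> 'c valuation" where
  "off S e w = (\<lambda>x. if x \<in> S then w x + ereal (e x) else w x)"

lemma ediff_fin[simp]: "ediff (ereal a) (ereal b) = ereal (a - b)"
  by (simp add: ediff_def)
lemma ediff_zero1[simp]: "ediff (ereal a) 0 = ereal a"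
  by (simp add: ediff_def zero_ereal_def)
lemma ediff_zero2[simp]: "ediff 0 (ereal a) = ereal (- a)"
  by (simp add: ediff_def zero_ereal_def)
lemma ediff_inf1[simp]: "ediff (ereal a) \<infinity> = -\<infinity>" "ediff (ereal a) (-\<infinity>) = \<infinity>"
   "ediff \<infinity> (ereal a) = \<infinity>" "ediff (-\<infinity>) (ereal a) = -\<infinity>"
  by (simp_all add: ediff_def)

locale regctx =
  fixes XF :: "'c set" and D :: "'c set" and S :: "'c set" and M :: nat and T :: real
    and u u' vk vk' :: "'c valuation"
  assumes T0: "0 \<le> T"
    and P1: "\<And>x. x \<in> S \<Longrightarrow> \<exists>r r'. vk x = ereal r \<and> vk' x = ereal r' \<and> r < - real M \<and> r' < - real M
              \<and> u x = ereal (r - T) \<and> u' x = ereal (r' - T)"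
    and P2: "\<And>x. x \<notin> S \<Longrightarrow> u' x = u x"
    and P3: "\<And>x. x \<notin> XF \<Longrightarrow> 0 \<le> u x"
    and P6: "\<And>x. x \<in> XF \<Longrightarrow> u x \<le> 0"
    and SXF: "S \<subseteq> XF"
    and P4: "\<And>x. x \<in> XF \<Longrightarrow> x \<notin> S \<Longrightarrow> x \<in> D \<Longrightarrow>
              (u x + ereal T = vk x \<and> vk' x = vk x) \<or> u x = -\<infinity> \<or> (- ereal T \<le> u x)"
    and P5: "\<And>x y. simK M (ediff (vk x) (vk y)) (ediff (vk' x) (vk' y))"
begin

lemma S_zero:
  assumes "a \<in> S"
  shows "simK M (ediff (u a) 0) (ediff (u' a) 0)" "simK M (ediff 0 (u a)) (ediff 0 (u' a))"
proof -
  obtain r r' where r: "vk a = ereal r" "vk' a = ereal r'" "r < - real M" "r' < - real M"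
     "u a = ereal (r - T)" "u' a = ereal (r' - T)" using P1[OF assms] by blast
  show "simK M (ediff (u a) 0) (ediff (u' a) 0)"
    using r T0 by (intro simK_low) auto
  show "simK M (ediff 0 (u a)) (ediff 0 (u' a))"
    using r T0 by (intro simK_high) auto
qed

lemma S_hist:
  assumes "a \<in> S" "b \<notin> XF"
  shows "simK M (ediff (u a) (u b)) (ediff (u' a) (u' b))" "simK M (ediff (u b) (u a)) (ediff (u' b) (u' a))"
proof -
  obtain r r' where r: "vk a = ereal r" "vk' a = ereal r'" "r < - real M" "r' < - real M"
     "u a = ereal (r - T)" "u' a = ereal (r' - T)" using P1[OF assms(1)] by blast
  have bS: "b \<notin> S" using assms SXF by auto
  have ub: "u' b = u b" using P2[OF bS] .
  have "0 \<le> u b" using P3 assms by auto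
  then consider "u b = \<infinity>" | s where "u b = ereal s" "0 \<le> s"
    by (cases "u b") auto
  then have "simK M (ediff (u a) (u b)) (ediff (u' a) (u' b)) \<and> simK M (ediff (u b) (u a)) (ediff (u' b) (u' a))"
  proof cases
    case 1 thus ?thesis using r ub by (simp add: simK_refl)
  next
    case 2 thus ?thesis using r ub T0
      apply - apply (rule conjI) apply (rule simK_low; auto) by (rule simK_high; auto)
  qed
  thus "simK M (ediff (u a) (u b)) (ediff (u' a) (u' b))" "simK M (ediff (u b) (u a)) (ediff (u' b) (u' a))"
    by auto
qed

lemma S_S:
  assumes "a \<in> S" "b \<in> S"
  shows "simK M (ediff (u a) (u b)) (ediff (u' a) (u' b))"
proof -
  obtain r r' where r: "vk a = ereal r" "vk' a = ereal r'"
     "u a = ereal (r - T)" "u' a = ereal (r' - T)" using P1[OF assms(1)] by blast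
  obtain s s' where s: "vk b = ereal s" "vk' b = ereal s'"
     "u b = ereal (s - T)" "u' b = ereal (s' - T)" using P1[OF assms(2)] by blast
  show ?thesis using P5[of a b] r s by simp
qed

lemma S_fut:
  assumes "a \<in> S" "b \<notin> S" "b \<in> XF" "b \<in> D"
  shows "simK M (ediff (u a) (u b)) (ediff (u' a) (u' b))" "simK M (ediff (u b) (u a)) (ediff (u' b) (u' a))"
proof -
  obtain r r' where r: "vk a = ereal r" "vk' a = ereal r'" "r < - real M" "r' < - real M"
     "u a = ereal (r - T)" "u' a = ereal (r' - T)" using P1[OF assms(1)] by blast
  have ub: "u' b = u b" using P2[OF assms(2)] .
  have ub0: "u b \<le> 0" using P6 assms by auto
  have "simK M (ediff (u a) (u b)) (ediff (u' a) (u' b)) \<and> simK M (ediff (u b) (u a)) (ediff (u' b) (u' a))"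
  proof (cases "u b = -\<infinity>")
    case True thus ?thesis using r ub by (simp add: simK_refl)
  next
    case False
    then obtain s where s: "u b = ereal s" using ub0 by (cases "u b") auto
    from P4[OF assms(3,2,4)] False
    consider "u b + ereal T = vk b" "vk' b = vk b" | "- ereal T \<le> u b" by auto
    thus ?thesis
    proof cases
      case 1
      hence "vk b = ereal (s + T)" "vk' b = ereal (s + T)" using s by auto
      thus ?thesis using P5[of a b] P5[of b a] r s ub by (simp add: algebra_simps)
    next
      case 2
      hence "- T \<le> s" using s by simp
      thus ?thesis using r s ub T0
        apply - apply (rule conjI) apply (rule simK_low; auto) by (rule simK_high; auto)
    qed
  qed
  thus "simK M (ediff (u a) (u b)) (ediff (u' a) (u' b))" "simK M (ediff (u b) (u a)) (ediff (u' b) (u' a))"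
    by auto
qed

lemma region:
  assumes diag: "\<And>a b. \<alpha> = Clk a \<Longrightarrow> \<beta> = Clk b \<Longrightarrow> a \<in> XF \<Longrightarrow> b \<in> XF \<Longrightarrow> a \<in> D \<and> b \<in> D"
  shows "simK M (ediff (clk_val u \<alpha>) (clk_val u \<beta>)) (ediff (clk_val u' \<alpha>) (clk_val u' \<beta>))"
proof (cases \<alpha>)
  case Zero
  show ?thesis
  proof (cases \<beta>)
    case Zero thus ?thesis using \<open>\<alpha> = Zero\<close> by (simp add: simK_refl)
  next
    case (Clk b) thus ?thesis using \<open>\<alpha> = Zero\<close> S_zero[of b] P2[of b] by (cases "b \<in> S") (auto simp: simK_refl)
  qed
next
  case (Clk a)
  show ?thesis
  proof (cases \<beta>)
    case Zero thus ?thesis using Clk S_zero[of a] P2[of a] by (cases "a \<in> S") (auto simp: simK_refl)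
  next
    fix b assume Clk2: "\<beta> = Clk b"
    show ?thesis
    proof (cases "a \<in> S")
      case aS: True
      show ?thesis
      proof (cases "b \<in> S")
        case True thus ?thesis using aS Clk Clk2 S_S by simp
      next
        case False
        show ?thesis
        proof (cases "b \<in> XF")
          case True
          with diag Clk Clk2 aS SXF have "b \<in> D" by auto
          thus ?thesis using S_fut(1)[OF aS False True] Clk Clk2 by simp
        next
          case bF: False thus ?thesis using S_hist(1)[OF aS bF] Clk Clk2 by simp
        qed
      qed
    next
      case aS: False
      show ?thesis
      proof (cases "b \<in> S")
        case bS: True
        show ?thesis
        proof (cases "a \<in> XF")
          case True
          with diag Clk Clk2 bS SXF have "a \<in> D" by auto
          thus ?thesis using S_fut(2)[OF bS aS True] Clk Clk2 by simp
        next
          case aF: False thus ?thesis using S_hist(2)[OF bS aF] Clk Clk2 by simp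
        qed
      next
        case False thus ?thesis using aS Clk Clk2 P2 by (simp add: simK_refl)
      qed
    qed
  qed
qed

end


lemma zb_bset: "(\<forall>c'. c = ZFin c' \<longrightarrow> \<bar>c'\<bar> \<le> int M) \<Longrightarrow> zb_val c \<in> bset M"
  by (cases c) (auto simp: bset_def)

lemma sat_atom_transfer:
  assumes "sat_atom u (\<alpha>, \<beta>, s, c)" "zb_val c \<in> bset M"
    "simK M (ediff (clk_val u \<alpha>) (clk_val u \<beta>)) (ediff (clk_val u' \<alpha>) (clk_val u' \<beta>))"
  shows "sat_atom u' (\<alpha>, \<beta>, s, c)"
  using assms unfolding simK_def by (auto split: if_splits)

definition rel :: "'c prog \<Rightarrow> 'c set" where
  "rel p = \<Union>{R. Change R \<in> set p}"

lemma rel_simps[simp]: "rel [] = {}" "rel (Guard g # p) = rel p" "rel (Change R # p) = R \<union> rel p"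
  by (auto simp: rel_def)

definition SafeP :: "'c set \<Rightarrow> 'c set \<Rightarrow> 'c prog \<Rightarrow> 'c valuation \<Rightarrow> bool" where
  "SafeP XF D p u \<longleftrightarrow> (\<forall>p1 R p2. p = p1 @ Change R # p2 \<longrightarrow>
      (\<forall>u'. prog_sem XF p1 u u' \<longrightarrow> (\<forall>x\<in>R \<inter> D. u' x = 0 \<or> u' x = -\<infinity>)))"

lemma SafeP_Guard: "SafeP XF D (Guard g # p) u \<Longrightarrow> sat u g \<Longrightarrow> SafeP XF D p u"
  unfolding SafeP_def
  apply clarify
  subgoal for p1 R p2 u' x
    apply (drule spec[of _ "Guard g # p1"])
    by auto
  done

lemma SafeP_Change: "SafeP XF D (Change R # p) u \<Longrightarrow> w \<in> change XF R u \<Longrightarrow> SafeP XF D p w"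
  unfolding SafeP_def
  apply clarify
  subgoal for p1 R' p2 u' x
    apply (drule spec[of _ "Change R # p1"])
    by auto
  done

lemma unchanged: "prog_sem XF p u w \<Longrightarrow> x \<notin> rel p \<Longrightarrow> w x = u x"
  apply (induction p arbitrary: u)
   apply simp
  subgoal for a p u by (cases a) (auto simp: change_def)
  done

lemma safe_val: "prog_sem XF p u w \<Longrightarrow> SafeP XF D p u \<Longrightarrow> x \<in> rel p \<Longrightarrow> x \<in> D
   \<Longrightarrow> u x = 0 \<or> u x = -\<infinity>"
proof (induction p arbitrary: u)
  case Nil thus ?case by simp
next
  case (Cons i p)
  show ?case
  proof (cases i)
    case (Guard g)
    have "SafeP XF D p u" "prog_sem XF p u w" using SafeP_Guard[of XF D g p u] Cons.prems Guard by auto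
    thus ?thesis using Cons.IH Cons.prems Guard by auto
  next
    case (Change R)
    show ?thesis
    proof (cases "x \<in> R")
      case True
      have "SafeP XF D ([] @ Change R # p) u" using Cons Change by simp
      thus ?thesis unfolding SafeP_def using True Cons.prems by fastforce
    next
      case False
      obtain w1 where w1: "w1 \<in> change XF R u" "prog_sem XF p w1 w" using Cons.prems Change by auto
      have "w1 x = u x" using w1 False by (auto simp: change_def)
      thus ?thesis using Cons.IH[OF w1(2) SafeP_Change[OF _ w1(1)]] Cons.prems Change False by auto
    qed
  qed
qed

definition gok :: "'c set \<Rightarrow> 'c set \<Rightarrow> nat \<Rightarrow> 'c guard \<Rightarrow> bool" where
  "gok XF D M g \<longleftrightarrow> (\<forall>(\<alpha>,\<beta>,s,c)\<in>set g. (\<forall>c'. c = ZFin c' \<longrightarrow> \<bar>c'\<bar> \<le> int M) \<and>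
      (\<forall>a b. \<alpha> = Clk a \<longrightarrow> \<beta> = Clk b \<longrightarrow> a\<in>XF \<longrightarrow> b\<in>XF \<longrightarrow> a\<in>D \<and> b\<in>D))"

locale progctx =
  fixes XF :: "'c set" and D :: "'c set" and E :: "'c set" and M :: nat and T :: real
    and w vk vk' :: "'c valuation" and e :: "'c \<Rightarrow> real"
  assumes T0: "0 \<le> T"
    and EXF: "E \<subseteq> XF"
    and W1: "\<And>x. x \<in> E \<Longrightarrow> \<exists>r r'. vk x = ereal r \<and> vk' x = ereal r' \<and> r < - real M \<and> r' < - real M
              \<and> w x = ereal (r - T) \<and> e x = r' - r"
    and W2: "\<And>x. x \<in> XF \<Longrightarrow> x \<notin> E \<Longrightarrow> x \<in> D \<Longrightarrow>
              (w x + ereal T = vk x \<and> vk' x = vk x) \<or> w x = -\<infinity> \<or> (- ereal T \<le> w x)"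
    and P5: "\<And>x y. simK M (ediff (vk x) (vk y)) (ediff (vk' x) (vk' y))"
begin

lemma guard_ok:
  assumes pw: "prog_sem XF p u w" and vu: "is_val XF u" and sp: "SafeP XF D p u"
    and g: "gok XF D M g" and su: "sat u g"
  shows "sat (off (E - rel p) e u) g"
proof -
  let ?S = "E - rel p"
  interpret regctx XF D ?S M T u "off ?S e u" vk vk'
  proof
    show "0 \<le> T" by (rule T0)
    fix x
    show "x \<in> ?S \<Longrightarrow> \<exists>r r'. vk x = ereal r \<and> vk' x = ereal r' \<and> r < - real M \<and> r' < - real M
              \<and> u x = ereal (r - T) \<and> off ?S e u x = ereal (r' - T)"
    proof -
      assume xS: "x \<in> ?S"
      obtain r r' where r: "vk x = ereal r" "vk' x = ereal r'" "r < - real M" "r' < - real M"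
        "w x = ereal (r - T)" "e x = r' - r" using W1 xS by blast
      have "u x = w x" using unchanged[OF pw] xS by auto
      thus ?thesis using r xS by (auto simp: off_def)
    qed
    show "x \<notin> ?S \<Longrightarrow> off ?S e u x = u x" by (auto simp: off_def)
    show "x \<notin> XF \<Longrightarrow> 0 \<le> u x" using vu by (auto simp: is_val_def)
    show "x \<in> XF \<Longrightarrow> u x \<le> 0" using vu by (auto simp: is_val_def)
    show "x \<in> XF \<Longrightarrow> x \<notin> ?S \<Longrightarrow> x \<in> D \<Longrightarrow>
              (u x + ereal T = vk x \<and> vk' x = vk x) \<or> u x = -\<infinity> \<or> (- ereal T \<le> u x)"
    proof -
      assume a: "x \<in> XF" "x \<notin> ?S" "x \<in> D"
      show ?thesis
      proof (cases "x \<in> rel p")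
        case True
        hence "u x = 0 \<or> u x = -\<infinity>" using safe_val[OF pw sp True a(3)] by simp
        thus ?thesis using T0 by auto
      next
        case False
        hence "u x = w x" "x \<notin> E" using unchanged[OF pw] a by auto
        thus ?thesis using W2[OF a(1) _ a(3)] by auto
      qed
    qed
    fix y
    show "simK M (ediff (vk x) (vk y)) (ediff (vk' x) (vk' y))" by (rule P5)
  next
    show "?S \<subseteq> XF" using EXF by auto
  qed
  show ?thesis unfolding sat_def
  proof
    fix atm assume atm: "atm \<in> set g"
    obtain \<alpha> \<beta> s c where atd: "atm = (\<alpha>, \<beta>, s, c)" by (cases atm) auto
    have c: "\<forall>c'. c = ZFin c' \<longrightarrow> \<bar>c'\<bar> \<le> int M"
      and dg: "\<And>a b. \<alpha> = Clk a \<Longrightarrow> \<beta> = Clk b \<Longrightarrow> a\<in>XF \<Longrightarrow> b\<in>XF \<Longrightarrow> a\<in>D \<and> b\<in>D"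
      using g atm atd unfolding gok_def by fastforce+
    have "sat_atom u atm" using su atm by (simp add: sat_def)
    thus "sat_atom (off ?S e u) atm" unfolding atd
      by (rule sat_atom_transfer[OF _ zb_bset[OF c] region[OF dg]])
  qed
qed

lemma prog_ok:
  assumes "prog_sem XF p u w" "is_val XF u" "\<forall>g. Guard g \<in> set p \<longrightarrow> gok XF D M g" "SafeP XF D p u"
  shows "prog_sem XF p (off (E - rel p) e u) (off E e w)"
  using assms
proof (induction p arbitrary: u)
  case Nil thus ?case by simp
next
  case (Cons i p)
  show ?case
  proof (cases i)
    case (Guard g)
    have pw: "prog_sem XF p u w" "sat u g" using Cons.prems Guard by auto
    have sp: "SafeP XF D p u" using SafeP_Guard Cons.prems(4) Guard pw(2) by blast
    have "sat (off (E - rel p) e u) g"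
      using guard_ok[OF pw(1) Cons.prems(2) sp _ pw(2)] Cons.prems(3) Guard by auto
    moreover have "prog_sem XF p (off (E - rel p) e u) (off E e w)"
      using Cons.IH[OF pw(1) Cons.prems(2) _ sp] Cons.prems(3) by auto
    ultimately show ?thesis using Guard by simp
  next
    case (Change R)
    obtain w1 where w1: "w1 \<in> change XF R u" "prog_sem XF p w1 w" using Cons.prems Change by auto
    have vw1: "is_val XF w1" using w1 by (simp add: change_def)
    have sp: "SafeP XF D p w1" using SafeP_Change Cons.prems(4) Change w1(1) by blast
    have ih: "prog_sem XF p (off (E - rel p) e w1) (off E e w)"
      using Cons.IH[OF w1(2) vw1 _ sp] Cons.prems(3) by auto
    have "off (E - rel p) e w1 \<in> change XF R (off (E - rel (Change R # p)) e u)"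
      unfolding change_def
    proof (intro CollectI conjI ballI allI impI)
      show "is_val XF (off (E - rel p) e w1)"
        unfolding is_val_def
      proof (intro conjI allI impI)
        fix x assume "x \<notin> XF" thus "0 \<le> off (E - rel p) e w1 x"
          using vw1 EXF by (auto simp: off_def is_val_def)
      next
        fix x assume xF: "x \<in> XF"
        show "off (E - rel p) e w1 x \<le> 0"
        proof (cases "x \<in> E - rel p")
          case True
          obtain r r' where r: "r' < - real M" "w x = ereal (r - T)" "e x = r' - r" using W1 True by blast
          have "w1 x = w x" using unchanged[OF w1(2)] True by auto
          thus ?thesis using True r T0 by (simp add: off_def)
        next
          case False thus ?thesis using vw1 xF by (auto simp: off_def is_val_def)
        qed
      qed
    next
      fix x assume "x \<in> R" "x \<notin> XF"
      thus "off (E - rel p) e w1 x = 0" using w1(1) EXF by (auto simp: off_def change_def)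
    next
      fix x assume "x \<notin> R"
      thus "off (E - rel p) e w1 x = off (E - rel (Change R # p)) e u x"
        using w1(1) by (auto simp: off_def change_def)
    qed
    thus ?thesis using ih Change by auto
  qed
qed

end


lemma off_empty[simp]: "off {} e w = w" by (simp add: off_def)

lemma shift_off: "shift (off S e w) \<delta> = off S e (shift w \<delta>)"
  by (auto simp: shift_def off_def fun_eq_iff ac_simps)

lemma released_rel: "released x tr \<longleftrightarrow> x \<in> rel (t_prog tr)"
  by (auto simp: released_def rel_def)

lemma ereal_mbset: "M \<le> K \<Longrightarrow> ereal (- real M) \<in> bset K"
  unfolding bset_def by (auto intro!: exI[of _ "- int M"])

theorem lemma11:
  fixes A :: "('q, 'a, 'c::finite) gta"
    and XF :: "'c set" and M :: nat and k :: nat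
    and q :: "nat \<Rightarrow> 'q" and v :: "nat \<Rightarrow> 'c valuation"
    and d :: "nat \<Rightarrow> real" and t :: "nat \<Rightarrow> ('q, 'a, 'c) transition"
    and vk' :: "'c valuation"
  assumes "is_gta A"
    and "safe XF A"
    and "bounded_by A M"
    and "is_path XF A k q v d t"
    and "sim_M M (v 1) (v k)"
    and "\<forall>x \<in> XF. (\<exists>i \<in> {1..<k}. released x (t i)) \<or> v 1 x = - \<infinity>"
    and "is_val XF vk'"
    and "\<forall>x \<in> {x. - ereal (real M) \<le> v 1 x}. vk' x = v k x"
    and "approx_M M (v 1) vk'"
  shows "\<exists>v'. v' 1 = v 1 \<and> v' k = vk' \<and> is_path XF A k q v' d t"
proof -
  note safeA = assms(2) and bnd = assms(3) and path = assms(4) and sim = assms(5)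
    and relh = assms(6) and vvk' = assms(7) and Lh = assms(8) and apx = assms(9)
  define D where "D = XD XF A"
  have k1: "1 \<le> k" using path by (simp add: is_path_def)
  have vval: "\<And>i. i \<in> {1..k} \<Longrightarrow> is_val XF (v i)" using path by (simp add: is_path_def)
  have stp: "\<And>i. i \<in> {1..<k} \<Longrightarrow> step XF A (q i) (v i) (d i) (t i) (q (Suc i)) (v (Suc i))"
    using path by (simp add: is_path_def)
  have dpos: "\<And>i. i \<in> {1..<k} \<Longrightarrow> 0 \<le> d i" using stp by (simp add: step_def)
  have psem: "\<And>i. i \<in> {1..<k} \<Longrightarrow> prog_sem XF (t_prog (t i)) (shift (v i) (d i)) (v (Suc i))"
    using stp by (simp add: step_def)
  have vsh: "\<And>i. i \<in> {1..<k} \<Longrightarrow> is_val XF (shift (v i) (d i))"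
    using stp by (simp add: step_def)
  have tin: "\<And>i. i \<in> {1..<k} \<Longrightarrow> t i \<in> gta_trans A" using stp by (simp add: step_def)
  have safeP: "\<And>i. i \<in> {1..<k} \<Longrightarrow> SafeP XF D (t_prog (t i)) (shift (v i) (d i))"
  proof -
    fix i assume i: "i \<in> {1..<k}"
    have "\<forall>p1 R p2. t_prog (t i) = p1 @ Change R # p2 \<longrightarrow>
       (\<forall>u u'. is_val XF u \<and> prog_sem XF p1 u u' \<longrightarrow>
          (\<forall>x \<in> R \<inter> XD XF A. u' x = 0 \<or> u' x = - \<infinity>))"
      using safeA tin[OF i] unfolding safe_def by blast
    thus "SafeP XF D (t_prog (t i)) (shift (v i) (d i))"
      unfolding SafeP_def D_def using vsh[OF i] by blast
  qed
  have gokh: "\<And>i g. i \<in> {1..<k} \<Longrightarrow> Guard g \<in> set (t_prog (t i)) \<Longrightarrow> gok XF D M g"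
  proof -
    fix i g assume i: "i \<in> {1..<k}" and g: "Guard g \<in> set (t_prog (t i))"
    have gg: "g \<in> guards_of A" unfolding guards_of_def using tin[OF i] g by blast
    show "gok XF D M g" unfolding gok_def
    proof (rule ballI)
      fix atm assume am: "atm \<in> set g"
      obtain \<alpha> \<beta> s c where atd: "atm = (\<alpha>, \<beta>, s, c)" by (cases atm) auto
      have c1: "\<forall>c'. c = ZFin c' \<longrightarrow> \<bar>c'\<bar> \<le> int M" using bnd gg am atd unfolding bounded_by_def by fastforce
      have c2: "\<forall>a b. \<alpha> = Clk a \<longrightarrow> \<beta> = Clk b \<longrightarrow> a\<in>XF \<longrightarrow> b\<in>XF \<longrightarrow> a\<in>D \<and> b\<in>D"
        using gg am atd unfolding D_def XD_def by blast
      show "case atm of (\<alpha>,\<beta>,s,c) \<Rightarrow> (\<forall>c'. c = ZFin c' \<longrightarrow> \<bar>c'\<bar> \<le> int M) \<and>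
      (\<forall>a b. \<alpha> = Clk a \<longrightarrow> \<beta> = Clk b \<longrightarrow> a\<in>XF \<longrightarrow> b\<in>XF \<longrightarrow> a\<in>D \<and> b\<in>D)"
        using c1 c2 atd by simp
    qed
  qed
  have cardpos: "0 < card (UNIV :: 'c set)" by (simp add: card_gt_0_iff)
  define n where "n = card (UNIV :: 'c set)"
  have simx: "\<And>x. simK (n * M) (v 1 x) (v k x)" using sim unfolding sim_M_def n_def by blast
  have simd: "\<And>x y. simK M (ediff (v 1 x) (v 1 y)) (ediff (v k x) (v k y))"
  proof -
    fix x y
    have "simK ((card (UNIV :: 'c set) + 1) * M) (ediff (v 1 x) (v 1 y)) (ediff (v k x) (v k y))"
      using sim unfolding sim_M_def by blast
    thus "simK M (ediff (v 1 x) (v 1 y)) (ediff (v k x) (v k y))" by (rule simK_mono[rotated]) simp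
  qed
  have apd: "\<And>x y. simK M (ediff (v 1 x) (v 1 y)) (ediff (vk' x) (vk' y))"
    using apx unfolding approx_M_def simK_def by blast
  have P5: "\<And>x y. simK M (ediff (v k x) (v k y)) (ediff (vk' x) (vk' y))"
    using simd apd simK_sym simK_trans by blast
  have apx1: "\<And>x c. c \<in> {\<infinity>, - \<infinity>} \<union> {ereal (of_int c) | c. c \<le> int M} \<Longrightarrow>
        (v 1 x < c \<longleftrightarrow> vk' x < c) \<and> (v 1 x \<le> c \<longleftrightarrow> vk' x \<le> c)"
    using apx unfolding approx_M_def by blast
  have Mn: "M \<le> n * M" using cardpos n_def by simp
  define N where "N = {x \<in> XF. v 1 x \<noteq> - \<infinity> \<and> v 1 x < ereal (- real M)}"
  have Nfin: "\<And>x. x \<in> N \<Longrightarrow> \<exists>r r'. v k x = ereal r \<and> vk' x = ereal r' \<and> r < - real M \<and> r' < - real M"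
  proof -
    fix x assume x: "x \<in> N"
    have b1: "- \<infinity> \<in> bset (n * M)" "ereal (- real M) \<in> bset (n * M)"
      using ereal_mbset[OF Mn] by (auto simp: bset_def)
    have i1: "v 1 x \<le> -\<infinity> \<longleftrightarrow> v k x \<le> -\<infinity>" using simx[of x] b1(1) unfolding simK_def by blast
    have i2: "v 1 x < ereal (- real M) \<longleftrightarrow> v k x < ereal (- real M)"
      using simx[of x] b1(2) unfolding simK_def by blast
    have "v k x \<noteq> - \<infinity>" "v k x < ereal (- real M)"
      using i1 i2 x unfolding N_def by auto
    moreover have "ereal (- real M) \<in> {ereal (of_int c) | c. c \<le> int M}"
      by (auto intro!: exI[of _ "- int M"])
    hence "vk' x \<noteq> - \<infinity>" "vk' x < ereal (- real M)"
      using apx1[of "-\<infinity>" x] apx1[of "ereal (- real M)" x] x unfolding N_def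
      by (auto simp del: ereal_less_eq simp: ereal_infty_less_eq(2))
    ultimately show "\<exists>r r'. v k x = ereal r \<and> vk' x = ereal r' \<and> r < - real M \<and> r' < - real M"
      by (cases "v k x"; cases "vk' x") auto
  qed
  have notN: "\<And>x. x \<notin> N \<Longrightarrow> vk' x = v k x"
  proof -
    fix x assume x: "x \<notin> N"
    show "vk' x = v k x"
    proof (cases "v 1 x = - \<infinity>")
      case True
      have "vk' x = -\<infinity>" using apx1[of "-\<infinity>" x] True by simp
      moreover have "v k x = -\<infinity>" using simx[of x] True unfolding simK_def bset_def by auto
      ultimately show ?thesis by simp
    next
      case False
      have "- ereal (real M) \<le> v 1 x"
      proof (cases "x \<in> XF")
        case True thus ?thesis using x False unfolding N_def by auto
      next
        case False
        have "0 \<le> v 1 x" using vval[of 1] k1 False by (auto simp: is_val_def)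
        moreover have "- ereal (real M) \<le> 0" by simp
        ultimately show ?thesis by (meson order_trans)
      qed
      thus ?thesis using Lh by auto
    qed
  qed
  have NXF: "N \<subseteq> XF" unfolding N_def by auto
  define T where "T j = (\<Sum>i\<in>{j..<k}. d i)" for j
  define rp where "rp j = (\<Union>i\<in>{j..<k}. rel (t_prog (t i)))" for j
  have Tsplit: "\<And>j. j < k \<Longrightarrow> T j = d j + T (Suc j)" unfolding T_def by (simp add: sum.atLeast_Suc_lessThan)
  have rpsplit: "\<And>j. j < k \<Longrightarrow> rp j = rel (t_prog (t j)) \<union> rp (Suc j)"
  proof -
    fix j assume "j < k"
    hence "{j..<k} = insert j {Suc j..<k}" by auto
    thus "rp j = rel (t_prog (t j)) \<union> rp (Suc j)" unfolding rp_def by simp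
  qed
  have Tk: "T k = 0" "rp k = {}" unfolding T_def rp_def by auto
  have Tpos: "\<And>j. 1 \<le> j \<Longrightarrow> 0 \<le> T j" unfolding T_def using dpos by (auto intro: sum_nonneg)
  have F1: "\<And>j x. 1 \<le> j \<Longrightarrow> j \<le> k \<Longrightarrow> x \<notin> rp j \<Longrightarrow> v j x + ereal (T j) = v k x"
  proof -
    fix j x assume j: "1 \<le> j" "j \<le> k"
    show "x \<notin> rp j \<Longrightarrow> v j x + ereal (T j) = v k x"
    proof (induction rule: inc_induct[OF j(2)])
      case 1 thus ?case using Tk by (simp add: zero_ereal_def[symmetric])
    next
      case (2 m)
      have m: "m \<in> {1..<k}" using 2 j by auto
      have nr: "x \<notin> rel (t_prog (t m))" "x \<notin> rp (Suc m)" using 2 rpsplit by auto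
      have "v (Suc m) x = v m x + ereal (d m)"
        using unchanged[OF psem[OF m] nr(1)] by (simp add: shift_def)
      hence "v k x = (v m x + ereal (d m)) + ereal (T (Suc m))" using 2 nr by simp
      also have "\<dots> = v m x + ereal (T m)" using Tsplit[of m] 2 by (simp add: add.assoc)
      finally show ?case by simp
    qed
  qed
  have F2: "\<And>j x. 1 \<le> j \<Longrightarrow> j \<le> k \<Longrightarrow> x \<in> D \<Longrightarrow> x \<in> rp j \<Longrightarrow> v j x = -\<infinity> \<or> - ereal (T j) \<le> v j x"
  proof -
    fix j x assume j: "1 \<le> j" "j \<le> k" and xD: "x \<in> D"
    show "x \<in> rp j \<Longrightarrow> v j x = -\<infinity> \<or> - ereal (T j) \<le> v j x"
    proof (induction rule: inc_induct[OF j(2)])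
      case 1 thus ?case using Tk by simp
    next
      case (2 m)
      have m: "m \<in> {1..<k}" using 2 j by auto
      have Tm: "T m = d m + T (Suc m)" "0 \<le> T (Suc m)" using Tsplit[of m] Tpos[of "Suc m"] 2 by auto
      show ?case
      proof (cases "x \<in> rel (t_prog (t m))")
        case True
        have "shift (v m) (d m) x = 0 \<or> shift (v m) (d m) x = -\<infinity>"
          using safe_val[OF psem[OF m] safeP[OF m] True xD] .
        hence "v m x + ereal (d m) = 0 \<or> v m x + ereal (d m) = -\<infinity>" by (simp add: shift_def)
        thus ?thesis using Tm by (cases "v m x") (auto simp: zero_ereal_def)
      next
        case False
        hence "x \<in> rp (Suc m)" using 2 rpsplit by auto
        hence ih: "v (Suc m) x = -\<infinity> \<or> - ereal (T (Suc m)) \<le> v (Suc m) x" using 2 by simp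
        have "v (Suc m) x = v m x + ereal (d m)"
          using unchanged[OF psem[OF m] False] by (simp add: shift_def)
        thus ?thesis using ih Tm by (cases "v m x") auto
      qed
    qed
  qed
  define E where "E j = N - rp j" for j
  define e where "e x = real_of_ereal (vk' x) - real_of_ereal (v k x)" for x
  define v' where "v' j = off (E j) e (v j)" for j
  have G: "\<And>j x. 1 \<le> j \<Longrightarrow> j \<le> k \<Longrightarrow> x \<in> E j \<Longrightarrow> \<exists>r r'. v k x = ereal r \<and> vk' x = ereal r' \<and>
      r < - real M \<and> r' < - real M \<and> v j x = ereal (r - T j) \<and> e x = r' - r"
  proof -
    fix j x assume j: "1 \<le> j" "j \<le> k" and x: "x \<in> E j"
    obtain r r' where r: "v k x = ereal r" "vk' x = ereal r'" "r < - real M" "r' < - real M"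
      using Nfin x unfolding E_def by blast
    have "v j x + ereal (T j) = ereal r" using F1[OF j] x r unfolding E_def by auto
    hence "v j x = ereal (r - T j)" by (cases "v j x") auto
    thus "\<exists>r r'. v k x = ereal r \<and> vk' x = ereal r' \<and>
      r < - real M \<and> r' < - real M \<and> v j x = ereal (r - T j) \<and> e x = r' - r"
      using r unfolding e_def by auto
  qed
  have v'val: "\<And>j. 1 \<le> j \<Longrightarrow> j \<le> k \<Longrightarrow> is_val XF (v' j)"
  proof -
    fix j assume j: "1 \<le> j" "j \<le> k"
    show "is_val XF (v' j)" unfolding is_val_def v'_def
    proof (intro conjI allI impI)
      fix x assume "x \<notin> XF" thus "0 \<le> off (E j) e (v j) x"
        using vval[of j] j NXF unfolding E_def by (auto simp: off_def is_val_def)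
    next
      fix x assume xF: "x \<in> XF"
      show "off (E j) e (v j) x \<le> 0"
      proof (cases "x \<in> E j")
        case True
        then obtain r r' where "r' < - real M" "v j x = ereal (r - T j)" "e x = r' - r"
          using G[OF j] by blast
        thus ?thesis using True Tpos[OF j(1)] by (simp add: off_def)
      next
        case False thus ?thesis using vval[of j] j xF by (auto simp: off_def is_val_def)
      qed
    qed
  qed
  have v'1: "v' 1 = v 1"
  proof -
    have "E 1 = {}"
    proof -
      { fix x assume x: "x \<in> N"
        hence "\<exists>i \<in> {1..<k}. released x (t i)" using relh NXF unfolding N_def by auto
        hence "x \<in> rp 1" unfolding rp_def released_rel by auto }
      thus ?thesis unfolding E_def by auto
    qed
    thus ?thesis unfolding v'_def by simp
  qed
  have v'k: "v' k = vk'"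
  proof
    fix x
    show "v' k x = vk' x"
    proof (cases "x \<in> N")
      case True
      then obtain r r' where "v k x = ereal r" "vk' x = ereal r'" using Nfin by blast
      thus ?thesis using True Tk unfolding v'_def E_def off_def e_def by simp
    next
      case False thus ?thesis using notN[OF False] unfolding v'_def E_def off_def by simp
    qed
  qed
  have steps: "\<And>j. j \<in> {1..<k} \<Longrightarrow> step XF A (q j) (v' j) (d j) (t j) (q (Suc j)) (v' (Suc j))"
  proof -
    fix j assume j: "j \<in> {1..<k}"
    have j1: "1 \<le> j" "j \<le> k" "1 \<le> Suc j" "Suc j \<le> k" using j by auto
    have Ej: "E j = E (Suc j) - rel (t_prog (t j))" using rpsplit[of j] j unfolding E_def by auto
    have shv: "shift (v' j) (d j) = off (E j) e (shift (v j) (d j))" unfolding v'_def by (rule shift_off)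
    interpret progctx XF D "E (Suc j)" M "T (Suc j)" "v (Suc j)" "v k" vk' e
    proof
      show "0 \<le> T (Suc j)" using Tpos j1 by auto
      show "E (Suc j) \<subseteq> XF" using NXF unfolding E_def by auto
      fix x
      show "x \<in> E (Suc j) \<Longrightarrow> \<exists>r r'. v k x = ereal r \<and> vk' x = ereal r' \<and> r < - real M \<and> r' < - real M
              \<and> v (Suc j) x = ereal (r - T (Suc j)) \<and> e x = r' - r" using G[OF j1(3,4)] by blast
      show "x \<in> XF \<Longrightarrow> x \<notin> E (Suc j) \<Longrightarrow> x \<in> D \<Longrightarrow>
              (v (Suc j) x + ereal (T (Suc j)) = v k x \<and> vk' x = v k x) \<or> v (Suc j) x = -\<infinity>
               \<or> (- ereal (T (Suc j)) \<le> v (Suc j) x)"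
      proof -
        assume a: "x \<in> XF" "x \<notin> E (Suc j)" "x \<in> D"
        show ?thesis
        proof (cases "x \<in> rp (Suc j)")
          case True thus ?thesis using F2[OF j1(3,4) a(3)] by auto
        next
          case False
          hence "x \<notin> N" using a unfolding E_def by auto
          thus ?thesis using F1[OF j1(3,4) False] notN by auto
        qed
      qed
      fix y
      show "simK M (ediff (v k x) (v k y)) (ediff (vk' x) (vk' y))" by (rule P5)
    qed
    have pr: "prog_sem XF (t_prog (t j)) (off (E j) e (shift (v j) (d j))) (v' (Suc j))"
      using prog_ok[OF psem[OF j] vsh[OF j] _ safeP[OF j]] gokh[OF j] Ej unfolding v'_def by auto
    have vs': "is_val XF (shift (v' j) (d j))" unfolding shv is_val_def
    proof (intro conjI allI impI)
      fix x assume "x \<notin> XF" thus "0 \<le> off (E j) e (shift (v j) (d j)) x"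
        using vsh[OF j] NXF unfolding E_def by (auto simp: off_def is_val_def)
    next
      fix x assume xF: "x \<in> XF"
      show "off (E j) e (shift (v j) (d j)) x \<le> 0"
      proof (cases "x \<in> E j")
        case True
        then obtain r r' where "r' < - real M" "v j x = ereal (r - T j)" "e x = r' - r"
          using G[OF j1(1,2)] by blast
        thus ?thesis using True Tpos[OF j1(3)] Tsplit[of j] j1 by (simp add: off_def shift_def)
      next
        case False thus ?thesis using vsh[OF j] xF by (auto simp: off_def is_val_def)
      qed
    qed
    show "step XF A (q j) (v' j) (d j) (t j) (q (Suc j)) (v' (Suc j))"
      using stp[OF j] v'val[OF j1(1,2)] v'val[OF j1(3,4)] vs' pr shv unfolding step_def by simp
  qed
  have "is_path XF A k q v' d t" unfolding is_path_def using k1 v'val steps by auto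
  thus ?thesis using v'1 v'k by blast
qed

end
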